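(* Let $\bar{\Phi}$, $\bar{\mu}$, $\lambda$ and $R_n$ be as in the context, and let $\delta_0$ be the Dirac mass at the origin of $\bar{\mathbb{K}}$. Then for every $n\in\mathbb{N}$, \[|\bar{\Phi}^n(\delta_0)|\le\frac{\lambda^n}{\bar{\mu}(\{0\})}\,\bar{\mu}(R_n),\] where $|\cdot|$ denotes total mass.
   Context: Let $\beta\in(1,2)$ be an algebraic integer none of whose Galois conjugates has modulus $1$. List all its Galois conjugates (both members of each complex-conjugate pair) as $\beta=\beta_1,\dots,\beta_d,\beta_{d+1},\dots,\beta_{d+s},\beta_{d+s+1}$, where $|\beta_1|,\dots,|\beta_d|>1$, $|\beta_{d+1}|,\dots,|\beta_{d+s}|<1$, and $\beta_{d+s+1}$ is real with $|\beta_{d+s+1}|>1$. For $z\in\mathbb{C}$ let $\mathbb{F}_z=\mathbb{R}$ if $z\in\mathbb{R}$ and $\mathbb{C}$ otherwise; let $\bar{\mathbb{K}}=\prod_{j=1}^{d+s+1}\mathbb{F}_{\beta_j}$, $\bar{\beta}^n=(\beta_1^n,\dots,\beta_{d+s+1}^n)$, and for $i\in\mathbb{Z}$ let $\bar{T}_i(x_1,\dots,x_{d+s+1})=(\beta_1x_1+i,\dots,\beta_{d+s+1}x_{d+s+1}+i)$. Let $\pi_e(x)=(x_1,\dots,x_d)$, $\pi_c(x)=(x_{d+1},\dots,x_{d+s})$, $\pi_{free}(x)=x_{d+s+1}$. For $j\le d$ let $I_{\beta_j}=[-\frac{1}{\beta_j-1},\frac{1}{\beta_j-1}]$ if $\beta_j>1$,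 $I_{\beta_j}=\{x\in\mathbb{R}:|x|\le\frac{2}{|\beta_j|-1}\}$ if $\beta_j<-1$, $I_{\beta_j}=\{z\in\mathbb{C}:|z|\le\frac{2}{|\beta_j|-1}\}$ if $\beta_j\notin\mathbb{R}$; $I=\prod_{j\le d}I_{\beta_j}$ and $S=\{x\in\bar{\mathbb{K}}:\pi_e(x)\in I\}$. Let $\bar{X}=\{\sum_{i=1}^n a_i\bar{\beta}^{n-i}:n\in\mathbb{N},a_i\in\{-1,0,1\}\}\cap S$. For $n\ge1$ and $x\in S$ let $\bar{\mu}_n(\{x\})=\#\{(a,b)\in\{0,1\}^n\times\{0,1\}^n:\sum_{i=1}^n(a_i-b_i)\bar{\beta}^{n-i}=x\}$, with $\bar{\mu}_n$ giving no mass outside $S$. It is known (from earlier work of the authors) that there exist $\lambda>1$ and $f:\bar{X}\to(0,\infty)$ with $\lambda^{-n}\bar{\mu}_n(\{x\})\to f(x)$ for every $x\in\bar{X}$, and that $0<f(x)\le f(0)$; let $\bar{\mu}=\sum_{x\in\bar{X}}f(x)\delta_x$. The operator $\bar{\Phi}$ on measures on $\bar{X}$ is $\bar{\Phi}(\mu)(A)=\mu(\bar{T}_{-1}^{-1}(A))+2\mu(\bar{T}_0^{-1}(A))+\mu(\bar{T}_1^{-1}(A))$ for $A\subset S$, and $\bar{\Phi}(\mu)(A)=\bar{\Phi}(\mu)(A\cap S)$ in general (no mass outside $S$). For $n\ge0$ let $R_n=\{x\in\bar{X}:|\pi_{free}(x)|\le\sum_{i=0}^{n-1}|\beta_{d+s+1}|^i\}$.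 *)

theory Defs
  imports "HOL-Analysis.Analysis" "HOL-Computational_Algebra.Polynomial_Factorial"
begin

text \<open>Points of the product space are modelled as functions nat => complex,
  with components indexed by 1..N (N = d+s+1), zero outside, and real
  components where the corresponding conjugate is real.\<close>

type_synonym point = "nat \<Rightarrow> complex"

definition Kbar :: "nat \<Rightarrow> (nat \<Rightarrow> complex) \<Rightarrow> point set" where
  "Kbar N bs = {x. (\<forall>j. j \<notin> {1..N} \<longrightarrow> x j = 0) \<and>
                    (\<forall>j\<in>{1..N}. bs j \<in> \<real> \<longrightarrow> x j \<in> \<real>)}"

definition Tmap :: "nat \<Rightarrow> (nat \<Rightarrow> complex) \<Rightarrow> int \<Rightarrow> point \<Rightarrow> point" where
  "Tmap N bs i x = (\<lambda>j. if j \<in> {1..N} then bs j * x j + of_int i else 0)"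

definition Ibeta :: "complex \<Rightarrow> complex set" where
  "Ibeta b = (if b \<in> \<real> \<and> Re b > 1 then {z. z \<in> \<real> \<and> \<bar>Re z\<bar> \<le> 1 / (Re b - 1)}
              else if b \<in> \<real> then {z. z \<in> \<real> \<and> cmod z \<le> 2 / (cmod b - 1)}
              else {z. cmod z \<le> 2 / (cmod b - 1)})"

definition Sset :: "nat \<Rightarrow> nat \<Rightarrow> (nat \<Rightarrow> complex) \<Rightarrow> point set" where
  "Sset N d bs = {x \<in> Kbar N bs. \<forall>j\<in>{1..d}. x j \<in> Ibeta (bs j)}"

definition embed :: "nat \<Rightarrow> (nat \<Rightarrow> complex) \<Rightarrow> int list \<Rightarrow> point" where
  "embed N bs c = (\<lambda>j. if j \<in> {1..N}
      then (\<Sum>i<length c. of_int (c ! i) * bs j ^ (length c - 1 - i)) else 0)"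

definition Xbar :: "nat \<Rightarrow> nat \<Rightarrow> (nat \<Rightarrow> complex) \<Rightarrow> point set" where
  "Xbar N d bs = {embed N bs c | c. set c \<subseteq> {-1, 0, 1}} \<inter> Sset N d bs"

definition mu_n :: "nat \<Rightarrow> nat \<Rightarrow> (nat \<Rightarrow> complex) \<Rightarrow> nat \<Rightarrow> point \<Rightarrow> nat" where
  "mu_n N d bs n x = (if x \<in> Sset N d bs then
      card {(a, b). a \<in> lists {0, 1} \<and> b \<in> lists {0, 1} \<and> length a = n \<and> length b = n
                    \<and> embed N bs (map2 (-) a b) = x}
    else 0)"

text \<open>Discrete measures are represented by their mass functions.\<close>
definition mass :: "(point \<Rightarrow> ennreal) \<Rightarrow> point set \<Rightarrow> ennreal" where
  "mass m A = (\<Sum>\<^sub>\<infinity>x\<in>A. m x)"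

definition Phi :: "nat \<Rightarrow> nat \<Rightarrow> (nat \<Rightarrow> complex) \<Rightarrow> (point \<Rightarrow> ennreal) \<Rightarrow> (point \<Rightarrow> ennreal)" where
  "Phi N d bs m = (\<lambda>y. if y \<in> Sset N d bs then
       mass m {x \<in> Kbar N bs. Tmap N bs (-1) x = y}
     + 2 * mass m {x \<in> Kbar N bs. Tmap N bs 0 x = y}
     + mass m {x \<in> Kbar N bs. Tmap N bs 1 x = y}
     else 0)"

definition delta0 :: "point \<Rightarrow> ennreal" where
  "delta0 = (\<lambda>x. if x = (\<lambda>_. 0) then 1 else 0)"

definition Rset :: "nat \<Rightarrow> nat \<Rightarrow> (nat \<Rightarrow> complex) \<Rightarrow> nat \<Rightarrow> point set" where
  "Rset N d bs n = {x \<in> Xbar N d bs. cmod (x N) \<le> (\<Sum>i<n. cmod (bs N) ^ i)}"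

definition mubar :: "nat \<Rightarrow> nat \<Rightarrow> (nat \<Rightarrow> complex) \<Rightarrow> (point \<Rightarrow> real) \<Rightarrow> point \<Rightarrow> ennreal" where
  "mubar N d bs f = (\<lambda>x. if x \<in> Xbar N d bs then ennreal (f x) else 0)"

end

theory Submission
  imports Defs
begin

definition PP :: "nat \<Rightarrow> (int list \<times> int list) set" where
  "PP n = {(a, b). a \<in> lists {0, 1} \<and> b \<in> lists {0, 1} \<and> length a = n \<and> length b = n}"

definition EE :: "nat \<Rightarrow> (nat \<Rightarrow> complex) \<Rightarrow> int list \<times> int list \<Rightarrow> point" where
  "EE N bs q = embed N bs (map2 (-) (fst q) (snd q))"

definition cnt :: "nat \<Rightarrow> (nat \<Rightarrow> complex) \<Rightarrow> nat \<Rightarrow> point \<Rightarrow> nat" where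
  "cnt N bs n y = card {q \<in> PP n. EE N bs q = y}"

lemma finite_PP: "finite (PP n)"
proof -
  have "PP n \<subseteq> {xs. set xs \<subseteq> {0,1} \<and> length xs = n} \<times> {xs. set xs \<subseteq> {0,1} \<and> length xs = n}"
    by (auto simp: PP_def)
  moreover have "finite {xs::int list. set xs \<subseteq> {0,1} \<and> length xs = n}"
    by (rule finite_lists_length_eq) simp
  ultimately show ?thesis by (meson finite_SigmaI finite_subset)
qed

lemma mu_n_cnt: "mu_n N d bs n x = (if x \<in> Sset N d bs then cnt N bs n x else 0)"
  unfolding mu_n_def cnt_def PP_def EE_def
  by (auto intro!: arg_cong[where f=card])

lemma embed_out: "j \<notin> {1..N} \<Longrightarrow> embed N bs c j = 0"
  by (simp add: embed_def del: atLeastAtMost_iff)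

lemma embed_snoc: "embed N bs (c @ [t]) = Tmap N bs t (embed N bs c)"
proof (rule ext)
  fix j
  show "embed N bs (c @ [t]) j = Tmap N bs t (embed N bs c) j"
  proof (cases "j \<in> {1..N}")
    case True
    have "(\<Sum>i<length c. of_int ((c @ [t]) ! i) * bs j ^ (length c - i))
        = (\<Sum>i<length c. bs j * (of_int (c ! i) * bs j ^ (length c - 1 - i)))"
    proof (rule sum.cong)
      fix i assume "i \<in> {..<length c}"
      then have "length c - i = Suc (length c - 1 - i)" by auto
      then show "of_int ((c @ [t]) ! i) * bs j ^ (length c - i) = bs j * (of_int (c ! i) * bs j ^ (length c - 1 - i))"
        using \<open>i \<in> {..<length c}\<close> by (simp add: nth_append)
    qed simp
    moreover have "embed N bs (c @ [t]) j = (\<Sum>i<length c. of_int ((c @ [t]) ! i) * bs j ^ (length c - i)) + of_int t"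
      using True by (simp add: embed_def)
    ultimately show ?thesis using True
      by (simp add: embed_def Tmap_def sum_distrib_left)
  next
    case False
    then show ?thesis by (simp add: Tmap_def embed_out del: atLeastAtMost_iff)
  qed
qed

lemma embed_append: "embed N bs (c0 @ c) = (\<lambda>j. bs j ^ length c * embed N bs c0 j + embed N bs c j)"
proof (induction c rule: rev_induct)
  case Nil
  then show ?case by (auto simp: embed_def)
next
  case (snoc t c)
  show ?case
  proof (rule ext)
    fix j
    have "embed N bs (c0 @ c @ [t]) j = Tmap N bs t (embed N bs (c0 @ c)) j"
      using embed_snoc[of N bs "c0 @ c" t] by simp
    also have "\<dots> = (if j \<in> {1..N} then bs j * (bs j ^ length c * embed N bs c0 j + embed N bs c j) + of_int t else 0)"
      using snoc.IH by (simp add: Tmap_def)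
    also have "\<dots> = bs j ^ length (c @ [t]) * embed N bs c0 j + embed N bs (c @ [t]) j"
    proof (cases "j \<in> {1..N}")
      case True
      then show ?thesis by (simp add: embed_snoc Tmap_def algebra_simps)
    next
      case False
      then show ?thesis by (simp add: embed_out del: atLeastAtMost_iff)
    qed
    finally show "embed N bs (c0 @ c @ [t]) j = bs j ^ length (c @ [t]) * embed N bs c0 j + embed N bs (c @ [t]) j" .
  qed
qed

lemma embed_Nil: "embed N bs [] = (\<lambda>_. 0)"
  by (auto simp: embed_def)

lemma map2_snoc: "length a = length b \<Longrightarrow> map2 (-) (a @ [u]) (b @ [v]) = map2 (-) a b @ [u - v :: int]"
  by simp

lemma embed_bound:
  assumes "j \<in> {1..N}" "\<forall>t\<in>set c. \<bar>t\<bar> \<le> 1"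
  shows "cmod (embed N bs c j) \<le> (\<Sum>i<length c. cmod (bs j) ^ i)"
  using assms(2)
proof (induction c rule: rev_induct)
  case Nil
  then show ?case by (simp add: embed_def)
next
  case (snoc t c)
  have e: "embed N bs (c @ [t]) j = bs j * embed N bs c j + of_int t"
    using assms(1) by (simp add: embed_snoc Tmap_def)
  have "cmod (embed N bs (c @ [t]) j) \<le> cmod (bs j) * cmod (embed N bs c j) + 1"
  proof -
    have "\<bar>t\<bar> \<le> 1" using snoc.prems by simp
    then have "cmod (of_int t :: complex) \<le> 1" by (metis norm_of_int of_int_abs of_int_1 of_int_le_iff)
    have "cmod (bs j * embed N bs c j + of_int t) \<le> cmod (bs j * embed N bs c j) + cmod (of_int t :: complex)"
      by (rule norm_triangle_ineq)
    also have "\<dots> = cmod (bs j) * cmod (embed N bs c j) + cmod (of_int t :: complex)"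
      by (simp add: norm_mult)
    finally show ?thesis unfolding e using \<open>cmod (of_int t :: complex) \<le> 1\<close> by linarith
  qed
  also have "\<dots> \<le> cmod (bs j) * (\<Sum>i<length c. cmod (bs j) ^ i) + 1"
    using snoc by (simp add: mult_left_mono)
  also have "\<dots> = (\<Sum>i<length (c @ [t]). cmod (bs j) ^ i)"
    by (simp only: length_append_singleton sum.lessThan_Suc_shift) (simp add: sum_distrib_left)
  finally show ?case .
qed


lemma mass_card:
  fixes E :: "'b \<Rightarrow> point"
  assumes "finite Q"
  shows "mass (\<lambda>x. of_nat (card {p\<in>Q. E p = x})) A = of_nat (card {p\<in>Q. E p \<in> A})"
proof -
  let ?g = "\<lambda>x. of_nat (card {p\<in>Q. E p = x}) :: ennreal"
  have "mass ?g A = infsum ?g (A \<inter> E ` Q)"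
  proof -
    have e: "x \<notin> E ` Q \<Longrightarrow> card {p\<in>Q. E p = x} = 0" for x
    proof -
      assume "x \<notin> E ` Q"
      then have "{p\<in>Q. E p = x} = {}" by auto
      then show ?thesis by (metis card.empty)
    qed
    show ?thesis unfolding mass_def by (rule infsum_cong_neutral) (auto simp: e)
  qed
  also have "\<dots> = (\<Sum>x\<in>A \<inter> E ` Q. ?g x)"
    using assms by simp
  also have "\<dots> = of_nat (\<Sum>x\<in>A \<inter> E ` Q. card {p\<in>Q. E p = x})"
    by simp
  also have "(\<Sum>x\<in>A \<inter> E ` Q. card {p\<in>Q. E p = x}) = card (\<Union>x\<in>A \<inter> E ` Q. {p\<in>Q. E p = x})"
    by (rule card_UN_disjoint[symmetric]) (use assms in auto)
  also have "(\<Union>x\<in>A \<inter> E ` Q. {p\<in>Q. E p = x}) = {p\<in>Q. E p \<in> A}"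
    by auto
  finally show ?thesis .
qed

lemma EE_snoc:
  assumes "length a = length b"
  shows "EE N bs (a @ [u], b @ [v]) = Tmap N bs (u - v) (EE N bs (a, b))"
  using assms by (simp add: EE_def embed_snoc)

definition DD :: "(int \<times> int) set" where "DD = {(0,0),(0,1),(1,0),(1,1)}"

definition gg :: "(int \<times> int) \<times> (int list \<times> int list) \<Rightarrow> int list \<times> int list" where
  "gg z = (fst (snd z) @ [fst (fst z)], snd (snd z) @ [snd (fst z)])"

lemma cnt_Suc_set:
  "{q\<in>PP (Suc n). EE N bs q = y}
   = gg ` (SIGMA d:DD. {p\<in>PP n. Tmap N bs (fst d - snd d) (EE N bs p) = y})"
proof
  show "{q\<in>PP (Suc n). EE N bs q = y} \<subseteq> gg ` (SIGMA d:DD. {p\<in>PP n. Tmap N bs (fst d - snd d) (EE N bs p) = y})"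
  proof
    fix q assume q: "q \<in> {q\<in>PP (Suc n). EE N bs q = y}"
    obtain a' b' where ab: "q = (a', b')" by (cases q)
    from q ab have "length a' = Suc n" "length b' = Suc n" by (auto simp: PP_def)
    then obtain a u b v where a': "a' = a @ [u]" "length a = n" and b': "b' = b @ [v]" "length b = n"
      by (metis length_Suc_conv_rev)
    have uv: "(u, v) \<in> DD" "a \<in> lists {0,1}" "b \<in> lists {0,1}"
      using q ab a' b' by (auto simp: PP_def DD_def)
    have "Tmap N bs (u - v) (EE N bs (a, b)) = y"
      using q ab a' b' EE_snoc[where a=a and b=b and u=u and v=v and N=N and bs=bs] by simp
    then have "((u, v), (a, b)) \<in> (SIGMA d:DD. {p\<in>PP n. Tmap N bs (fst d - snd d) (EE N bs p) = y})"
      using uv a' b' by (auto simp: PP_def)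
    moreover have "q = gg ((u, v), (a, b))" using ab a' b' by (simp add: gg_def)
    ultimately show "q \<in> gg ` (SIGMA d:DD. {p\<in>PP n. Tmap N bs (fst d - snd d) (EE N bs p) = y})"
      by blast
  qed
next
  show "gg ` (SIGMA d:DD. {p\<in>PP n. Tmap N bs (fst d - snd d) (EE N bs p) = y}) \<subseteq> {q\<in>PP (Suc n). EE N bs q = y}"
  proof
    fix q assume "q \<in> gg ` (SIGMA d:DD. {p\<in>PP n. Tmap N bs (fst d - snd d) (EE N bs p) = y})"
    then obtain u v a b where q: "q = gg ((u, v), (a, b))" "(u, v) \<in> DD" "(a, b) \<in> PP n"
      "Tmap N bs (u - v) (EE N bs (a, b)) = y" by auto
    then have "length a = length b" by (simp add: PP_def)
    then show "q \<in> {q\<in>PP (Suc n). EE N bs q = y}"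
      using q EE_snoc[where a=a and b=b and u=u and v=v and N=N and bs=bs] by (auto simp: gg_def PP_def DD_def)
  qed
qed

lemma inj_gg: "inj_on gg X"
  by (auto simp: inj_on_def gg_def)

lemma cnt_Suc:
  "cnt N bs (Suc n) y = card {p\<in>PP n. Tmap N bs (-1) (EE N bs p) = y}
     + 2 * card {p\<in>PP n. Tmap N bs 0 (EE N bs p) = y} + card {p\<in>PP n. Tmap N bs 1 (EE N bs p) = y}"
proof -
  have "cnt N bs (Suc n) y = card (SIGMA d:DD. {p\<in>PP n. Tmap N bs (fst d - snd d) (EE N bs p) = y})"
    unfolding cnt_def cnt_Suc_set by (rule card_image) (rule inj_gg)
  also have "\<dots> = (\<Sum>d\<in>DD. card {p\<in>PP n. Tmap N bs (fst d - snd d) (EE N bs p) = y})"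
    by (rule card_SigmaI) (auto simp: DD_def finite_PP)
  also have "\<dots> = card {p\<in>PP n. Tmap N bs (-1) (EE N bs p) = y}
     + 2 * card {p\<in>PP n. Tmap N bs 0 (EE N bs p) = y} + card {p\<in>PP n. Tmap N bs 1 (EE N bs p) = y}"
    by (simp add: DD_def)
  finally show ?thesis .
qed

lemma cnt_mult:
  "cnt N bs k (\<lambda>_. 0) * cnt N bs n y \<le> cnt N bs (k + n) y"
proof -
  let ?h = "\<lambda>z::(int list \<times> int list) \<times> (int list \<times> int list). (fst (fst z) @ fst (snd z), snd (fst z) @ snd (snd z))"
  let ?A = "{q\<in>PP k. EE N bs q = (\<lambda>_. 0)} \<times> {p\<in>PP n. EE N bs p = y}"
  have "inj_on ?h ?A"
    by (auto simp: inj_on_def PP_def)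
  moreover have "?h ` ?A \<subseteq> {q\<in>PP (k + n). EE N bs q = y}"
  proof
    fix q assume "q \<in> ?h ` ?A"
    then obtain a0 b0 a b where q: "q = (a0 @ a, b0 @ b)" "(a0, b0) \<in> PP k" "(a, b) \<in> PP n"
      "EE N bs (a0, b0) = (\<lambda>_. 0)" "EE N bs (a, b) = y" by auto
    then have "map2 (-) (a0 @ a) (b0 @ b) = map2 (-) a0 b0 @ map2 (-) a b"
      by (simp add: PP_def)
    then have "EE N bs q = EE N bs (a, b)"
      using q(1,4) by (simp add: EE_def embed_append)
    then show "q \<in> {q\<in>PP (k + n). EE N bs q = y}"
      using q by (auto simp: PP_def)
  qed
  moreover have "finite {q\<in>PP (k + n). EE N bs q = y}" using finite_PP by simp
  ultimately have "card ?A \<le> card {q\<in>PP (k + n). EE N bs q = y}"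
    by (rule card_inj_on_le)
  then show ?thesis by (simp add: cnt_def card_cartesian_product)
qed


lemma mass_mono:
  assumes "\<And>x. m x \<le> m' x" "A \<subseteq> B"
  shows "mass m A \<le> mass m' B"
  unfolding mass_def
  by (rule infsum_mono_neutral) (use assms in \<open>auto intro: nonneg_summable_on_complete\<close>)

lemma mass_Tmap:
  "mass (\<lambda>x. of_nat (cnt N bs n x)) {x. Tmap N bs i x = y} = of_nat (card {p\<in>PP n. Tmap N bs i (EE N bs p) = y})"
  unfolding cnt_def using mass_card[OF finite_PP, where E="EE N bs" and A="{x. Tmap N bs i x = y}"]
  by simp

lemma Phi_le:
  assumes "\<And>x. m x \<le> of_nat (cnt N bs n x)"
  shows "Phi N d bs m y \<le> of_nat (cnt N bs (Suc n) y)"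
proof (cases "y \<in> Sset N d bs")
  case False
  then show ?thesis by (simp add: Phi_def)
next
  case True
  have b: "mass m {x \<in> Kbar N bs. Tmap N bs i x = y} \<le> of_nat (card {p\<in>PP n. Tmap N bs i (EE N bs p) = y})" for i
  proof -
    have "mass m {x \<in> Kbar N bs. Tmap N bs i x = y} \<le> mass (\<lambda>x. of_nat (cnt N bs n x)) {x. Tmap N bs i x = y}"
      by (rule mass_mono) (use assms in auto)
    then show ?thesis by (simp add: mass_Tmap)
  qed
  have "Phi N d bs m y = mass m {x \<in> Kbar N bs. Tmap N bs (-1) x = y}
       + 2 * mass m {x \<in> Kbar N bs. Tmap N bs 0 x = y}
       + mass m {x \<in> Kbar N bs. Tmap N bs 1 x = y}"
    using True by (simp add: Phi_def)
  also have "\<dots> \<le> of_nat (card {p\<in>PP n. Tmap N bs (-1) (EE N bs p) = y})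
       + 2 * of_nat (card {p\<in>PP n. Tmap N bs 0 (EE N bs p) = y})
       + of_nat (card {p\<in>PP n. Tmap N bs 1 (EE N bs p) = y})"
    by (intro add_mono mult_left_mono b) simp
  also have "\<dots> = of_nat (cnt N bs (Suc n) y)"
    by (simp add: cnt_Suc)
  finally show ?thesis .
qed

lemma PP_0: "PP 0 = {([], [])}"
  by (auto simp: PP_def)

lemma iter_le: "(Phi N d bs ^^ n) delta0 y \<le> of_nat (cnt N bs n y)"
proof (induction n arbitrary: y)
  case 0
  have "cnt N bs 0 (\<lambda>_. 0) = 1"
  proof -
    have "{q \<in> PP 0. EE N bs q = (\<lambda>_. 0)} = {([], [])}"
      by (auto simp: PP_0 EE_def embed_Nil)
    then show ?thesis by (simp add: cnt_def)
  qed
  then show ?case by (simp add: delta0_def)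
next
  case (Suc n)
  then show ?case by (simp add: Phi_le)
qed

theorem lemma4p1:
  fixes \<beta> :: real and p :: "int poly" and bs :: "nat \<Rightarrow> complex" and d s N :: nat
    and lam :: real and f :: "point \<Rightarrow> real" and n :: nat
  assumes beta_range: "1 < \<beta>" "\<beta> < 2"
    and minpoly: "lead_coeff p = 1" "irreducible p" "poly (map_poly of_int p) (complex_of_real \<beta>) = 0"
    and N_def: "N = d + s + 1"
    and conj_inj: "inj_on bs {1..N}"
    and conj_all: "bs ` {1..N} = {z. poly (map_poly of_int p) z = 0}"
    and no_unit: "\<forall>j\<in>{1..N}. cmod (bs j) \<noteq> 1"
    and beta_first: "d \<ge> 1" "bs 1 = complex_of_real \<beta>"
    and expanding: "\<forall>j\<in>{1..d}. cmod (bs j) > 1"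
    and contracting: "\<forall>j\<in>{d+1..d+s}. cmod (bs j) < 1"
    and free: "bs N \<in> \<real>" "cmod (bs N) > 1"
    and lam: "lam > 1"
    and f_lim: "\<forall>x\<in>Xbar N d bs. (\<lambda>k. real (mu_n N d bs k x) / lam ^ k) \<longlonglongrightarrow> f x"
    and f_pos: "\<forall>x\<in>Xbar N d bs. 0 < f x \<and> f x \<le> f (\<lambda>_. 0)"
  shows "mass ((Phi N d bs ^^ n) delta0) UNIV
           \<le> ennreal (lam ^ n / f (\<lambda>_. 0)) * mass (mubar N d bs f) (Rset N d bs n)"
proof -
  let ?S = "Sset N d bs"
  let ?G = "(Phi N d bs ^^ n) delta0"
  let ?z = "(\<lambda>_. 0) :: point"
  let ?F = "EE N bs ` PP n \<inter> ?S"
  have N1: "N \<in> {1..N}" using N_def by simp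
  have z_S: "?z \<in> ?S"
  proof -
    have "?z \<in> Kbar N bs" by (simp add: Kbar_def)
    moreover have "?z j \<in> Ibeta (bs j)" if "j \<in> {1..d}" for j
    proof -
      have "cmod (bs j) > 1" using expanding that by blast
      then show ?thesis by (auto simp: Ibeta_def)
    qed
    ultimately show ?thesis by (simp add: Sset_def)
  qed
  have z_X: "?z \<in> Xbar N d bs"
    unfolding Xbar_def using z_S embed_Nil[of N bs, symmetric] by fastforce
  have G0: "?G y = 0" if "y \<notin> ?S" for y
  proof (cases n)
    case 0
    then show ?thesis using that z_S by (auto simp: delta0_def)
  next
    case (Suc m)
    then show ?thesis using that by (simp add: Phi_def)
  qed
  have F_X: "y \<in> Xbar N d bs" and F_R: "y \<in> Rset N d bs n" if "y \<in> ?F" for y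
  proof -
    obtain a b where ab: "(a, b) \<in> PP n" "y = EE N bs (a, b)" "y \<in> ?S" using \<open>y \<in> ?F\<close> by auto
    have sc: "set (map2 (-) a b) \<subseteq> {-1, 0, 1}"
    proof
      fix t assume "t \<in> set (map2 (-) a b)"
      then obtain u v where "(u, v) \<in> set (zip a b)" "t = u - v" by auto
      then have "u \<in> {0,1}" "v \<in> {0,1}" using ab(1)
        by (auto simp: PP_def dest: set_zip_leftD set_zip_rightD)
      then show "t \<in> {-1, 0, 1}" using \<open>t = u - v\<close> by auto
    qed
    show X: "y \<in> Xbar N d bs"
    proof -
      have "y \<in> {embed N bs c | c. set c \<subseteq> {-1, 0, 1}}"
      proof -
        have "y = embed N bs (map2 (-) a b)" using ab(2) by (simp add: EE_def)
        then show ?thesis using sc by blast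
      qed
      then show ?thesis using ab(3) by (simp add: Xbar_def)
    qed
    have len: "length (map2 (-) a b) = n" using ab(1) by (simp add: PP_def)
    have "\<forall>t\<in>set (map2 (-) a b). \<bar>t\<bar> \<le> 1" using sc by auto
    from embed_bound[OF N1 this, of bs] len
    have "cmod (y N) \<le> (\<Sum>i<n. cmod (bs N) ^ i)" using ab(2) by (simp add: EE_def)
    then show "y \<in> Rset N d bs n" using X by (simp add: Rset_def)
  qed
  have f0: "f ?z > 0" using f_pos z_X by blast
  have key: "real (cnt N bs n y) \<le> lam ^ n / f ?z * f y" if "y \<in> ?F" for y
  proof -
    have yS: "y \<in> ?S" and yX: "y \<in> Xbar N d bs" using that F_X by auto
    let ?c = "real (cnt N bs n y) / lam ^ n"
    have ineq: "real (mu_n N d bs k ?z) / lam ^ k * ?c \<le> real (mu_n N d bs (k + n) y) / lam ^ (k + n)" for k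
    proof -
      have "real (mu_n N d bs k ?z) * real (cnt N bs n y) \<le> real (mu_n N d bs (k + n) y)"
        using cnt_mult[of N bs k n y] yS z_S by (simp add: mu_n_cnt del: of_nat_mult) (metis of_nat_le_iff of_nat_mult)
      then show ?thesis using lam by (simp add: power_add divide_right_mono)
    qed
    have l1: "(\<lambda>k. real (mu_n N d bs k ?z) / lam ^ k * ?c) \<longlonglongrightarrow> f ?z * ?c"
      using f_lim z_X by (intro tendsto_mult tendsto_const) auto
    have l2: "(\<lambda>k. real (mu_n N d bs (k + n) y) / lam ^ (k + n)) \<longlonglongrightarrow> f y"
      using LIMSEQ_ignore_initial_segment[of "\<lambda>k. real (mu_n N d bs k y) / lam ^ k" "f y" n] f_lim yX by auto
    have "f ?z * ?c \<le> f y"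
      by (rule LIMSEQ_le[OF l1 l2]) (use ineq in auto)
    then have "?c \<le> f y / f ?z" using f0 by (simp add: field_simps)
    then show ?thesis using lam f0 by (simp add: field_simps)
  qed
  have finF: "finite ?F" using finite_PP by simp
  have "mass ?G UNIV = infsum ?G ?F"
    unfolding mass_def
  proof (rule infsum_cong_neutral)
    fix y assume "y \<in> UNIV - ?F"
    show "?G y = 0"
    proof (cases "y \<in> ?S")
      case False then show ?thesis by (rule G0)
    next
      case True
      then have "y \<notin> EE N bs ` PP n" using \<open>y \<in> UNIV - ?F\<close> by auto
      then have "{q \<in> PP n. EE N bs q = y} = {}" by auto
      then have "cnt N bs n y = 0" unfolding cnt_def by (metis card.empty)
      then show ?thesis using iter_le[where N=N and d=d and bs=bs and n=n and y=y] by simp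
    qed
  qed auto
  also have "\<dots> = (\<Sum>y\<in>?F. ?G y)" using finF by simp
  also have "\<dots> \<le> (\<Sum>y\<in>?F. ennreal (lam ^ n / f ?z) * ennreal (f y))"
  proof (rule sum_mono)
    fix y assume y: "y \<in> ?F"
    have "?G y \<le> of_nat (cnt N bs n y)" by (rule iter_le)
    also have "\<dots> = ennreal (real (cnt N bs n y))" by (simp add: ennreal_of_nat_eq_real_of_nat)
    also have "\<dots> \<le> ennreal (lam ^ n / f ?z * f y)" using key[OF y] by (rule ennreal_leI)
    also have "\<dots> = ennreal (lam ^ n / f ?z) * ennreal (f y)"
      using lam f0 f_pos F_X[OF y] by (intro ennreal_mult) (auto simp: less_imp_le)
    finally show "?G y \<le> ennreal (lam ^ n / f ?z) * ennreal (f y)" .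
  qed
  also have "\<dots> = ennreal (lam ^ n / f ?z) * (\<Sum>y\<in>?F. mubar N d bs f y)"
    by (simp add: sum_distrib_left mubar_def F_X)
  also have "(\<Sum>y\<in>?F. mubar N d bs f y) = mass (mubar N d bs f) ?F"
    using finF by (simp add: mass_def)
  also have "\<dots> \<le> mass (mubar N d bs f) (Rset N d bs n)"
    by (rule mass_mono) (use F_R in auto)
  finally show ?thesis by (simp add: mult_left_mono)
qed

end
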